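(* Let $m,n\ge0$, $0\le k\le\min(m,n)$, and let $i,j$ be integers with $0\le i\le m$, $0\le j\le n$, $k\le i+j\le m+n-k$. Then $$\binom{m-k+j}{m-k}\,c_{m,\,n-k+i,\,i}(k,\ i+j-k)=\binom{m-k+j}{m-i}\,c_{m,n,k}(i,j).$$
   Context: Binomial coefficients $\binom{a}{b}$ equal $\frac{a!}{b!(a-b)!}$ when $0\le b\le a$ and $0$ otherwise. Let $e,f,h$ be the standard basis of $\mathfrak{sl}(2,\mathbb{C})$. $V(n)$ is the irreducible representation of highest weight $n$ with fixed highest weight vector $\phi_n$; $\{f^i\phi_n\}_{0\le i\le n}$ is a basis, $f^{n+1}\phi_n=0$. $\mathfrak{sl}(2)$ acts on $V(m)\otimes V(n)$ by $X(v\otimes w)=Xv\otimes w+v\otimes Xw$. For any $m,n\ge 0$ and $0\le k\le\min(m,n)$, $\phi_{m,n,k}=\sum_{l=0}^{k}(-1)^l\binom{m-l}{k-l}\binom{n-k+l}{l} f^l\phi_m\otimes f^{k-l}\phi_n\in V(m)\otimes V(n)$ (a highest weight vector of weight $m+n-2k$). The coordinates $c_{m,n,k}(i,j)$ are defined by $f^{p-k}\phi_{m,n,k}=\sum_{i+j=p,\,0\le i\le m,\,0\le j\le n} c_{m,n,k}(i,j)\, f^i\phi_m\otimes f^j\phi_n$ for $k\le p\le m+n-k$. *)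

theory Defs
  imports Complex_Main
begin

text \<open>Model of V(m) \<otimes> V(n): a vector is given by its coordinates v (i,j) with respect to the
basis f^i phi_m \<otimes> f^j phi_n, 0 \<le> i \<le> m, 0 \<le> j \<le> n (coordinates outside this range are 0).\<close>

type_synonym tvec = "nat \<times> nat \<Rightarrow> complex"

text \<open>Action of f on V(m) \<otimes> V(n): f(f^a phi_m \<otimes> f^b phi_n) = f^(a+1) phi_m \<otimes> f^b phi_n
 + f^a phi_m \<otimes> f^(b+1) phi_n, with f^(m+1) phi_m = 0 and f^(n+1) phi_n = 0.\<close>

definition f_act :: "nat \<Rightarrow> nat \<Rightarrow> tvec \<Rightarrow> tvec" where
  "f_act m n v = (\<lambda>(i, j). if i \<le> m \<and> j \<le> n
      then (if 0 < i then v (i - 1, j) else 0) + (if 0 < j then v (i, j - 1) else 0)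
      else 0)"

definition phi :: "nat \<Rightarrow> nat \<Rightarrow> nat \<Rightarrow> tvec" where
  "phi m n k = (\<lambda>(i, j). if i \<le> k \<and> j = k - i \<and> i \<le> m \<and> j \<le> n
      then (-1) ^ i * of_nat ((m - i) choose (k - i)) * of_nat ((n - k + i) choose i)
      else 0)"

definition cc :: "nat \<Rightarrow> nat \<Rightarrow> nat \<Rightarrow> nat \<Rightarrow> nat \<Rightarrow> complex" where
  "cc m n k i j = ((f_act m n) ^^ (i + j - k)) (phi m n k) (i, j)"

end

theory Submission imports Defs begin

lemma iter:
  assumes supp: "\<And>a b. m < a \<or> n < b \<Longrightarrow> v (a,b) = 0"
  shows "(f_act m n ^^ r) v (i,j) = (if i \<le> m \<and> j \<le> n then
     (\<Sum>s\<le>r. of_nat (r choose s) * (if s \<le> i \<and> r - s \<le> j then v (i-s, j-(r-s)) else 0)) else 0)"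
proof (induction r arbitrary: i j)
  case 0
  then show ?case using supp by auto
next
  case (Suc r)
  define h where "h = (\<lambda>s. if s \<le> i \<and> Suc r - s \<le> j then v (i-s, j-(Suc r-s)) else 0)"
  show ?case
  proof (cases "i \<le> m \<and> j \<le> n")
    case False
    then show ?thesis by (auto simp: f_act_def)
  next
    case True
    have A: "(if 0 < i then (f_act m n ^^ r) v (i-1, j) else 0) = (\<Sum>s\<le>r. of_nat (r choose s) * h (Suc s))"
      using True by (auto simp: Suc.IH h_def intro!: sum.cong)
    have B: "(if 0 < j then (f_act m n ^^ r) v (i, j-1) else 0) = (\<Sum>s\<le>r. of_nat (r choose s) * h s)"
    proof (cases "j = 0")
      case True
      have "h s = 0 \<or> r choose s = 0" if "s \<le> r" for s using that True by (auto simp: h_def)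
      then show ?thesis using True by (auto intro!: sum.neutral)
    next
      case False
      then show ?thesis using True by (auto simp: Suc.IH h_def intro!: sum.cong)
    qed
    have "(\<Sum>s\<le>Suc r. of_nat (Suc r choose s) * h s) = h 0 + (\<Sum>s\<le>r. of_nat (Suc r choose Suc s) * h (Suc s))"
      by (subst sum.atMost_Suc_shift) simp
    also have "\<dots> = h 0 + (\<Sum>s\<le>r. of_nat (r choose Suc s) * h (Suc s)) + (\<Sum>s\<le>r. of_nat (r choose s) * h (Suc s))"
      by (simp add: sum.distrib algebra_simps)
    also have "h 0 + (\<Sum>s\<le>r. of_nat (r choose Suc s) * h (Suc s)) = (\<Sum>s\<le>Suc r. of_nat (r choose s) * h s)"
      by (subst sum.atMost_Suc_shift) simp
    also have "\<dots> = (\<Sum>s\<le>r. of_nat (r choose s) * h s)" by simp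
    finally have C: "(\<Sum>s\<le>Suc r. of_nat (Suc r choose s) * h s) = (\<Sum>s\<le>r. of_nat (r choose s) * h s) + (\<Sum>s\<le>r. of_nat (r choose s) * h (Suc s))" .
    have D: "(f_act m n ^^ Suc r) v (i,j) = (if 0 < i then (f_act m n ^^ r) v (i-1, j) else 0) + (if 0 < j then (f_act m n ^^ r) v (i, j-1) else 0)"
      using True by (simp only: funpow.simps comp_apply) (simp add: f_act_def[where v="(f_act m n ^^ r) v"])
    show ?thesis using True A B C D by (simp add: h_def)
  qed
qed

lemma cc_formula:
  assumes "k \<le> m" "k \<le> n" "k \<le> i+j" "i \<le> m" "j \<le> n"
  shows "cc m n k i j = (\<Sum>l\<in>{l. l \<le> k \<and> l \<le> i \<and> k - l \<le> j}. (-1)^l * of_nat ((m-l) choose (k-l))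
           * of_nat ((n-k+l) choose l) * of_nat ((i+j-k) choose (i-l)))"
proof -
  define r where "r = i + j - k"
  define G where "G = (\<lambda>s. of_nat (r choose s) * ((-1)^(i-s) * of_nat ((m-(i-s)) choose (k-(i-s)))
           * of_nat ((n-k+(i-s)) choose (i-s))) :: complex)"
  have supp: "\<And>a b. m < a \<or> n < b \<Longrightarrow> phi m n k (a,b) = 0" by (auto simp: phi_def)
  have "cc m n k i j = (\<Sum>s\<le>r. of_nat (r choose s) * (if s \<le> i \<and> r - s \<le> j then phi m n k (i-s, j-(r-s)) else 0))"
    unfolding cc_def r_def[symmetric] using assms by (simp add: iter[of m n "phi m n k", OF supp])
  also have "\<dots> = (\<Sum>s\<le>r. if s \<le> i \<and> r - s \<le> j \<and> i - s \<le> k then G s else 0)"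
    using assms by (intro sum.cong) (auto simp: phi_def G_def r_def add.commute)
  also have "\<dots> = (\<Sum>s\<in>{s\<in>{..r}. s \<le> i \<and> r - s \<le> j \<and> i - s \<le> k}. G s)"
    by (rule sum.inter_filter[symmetric]) simp
  also have "\<dots> = (\<Sum>l\<in>{l. l \<le> k \<and> l \<le> i \<and> k - l \<le> j}. (-1)^l * of_nat ((m-l) choose (k-l))
           * of_nat ((n-k+l) choose l) * of_nat ((i+j-k) choose (i-l)))"
    using assms by (intro sum.reindex_bij_witness[where i="\<lambda>l. i - l" and j="\<lambda>s. i - s"])
      (auto simp: G_def r_def add.commute)
  finally show ?thesis .
qed

lemma term_id:
  assumes "l \<le> i" "l \<le> k" "k \<le> j + l" "i \<le> m" "k \<le> m"
  shows "(of_nat ((m-k+j) choose (m-k)) * of_nat ((m-l) choose (i-l)) * of_nat (j choose (k-l)) :: complex)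
       = of_nat ((m-k+j) choose (m-i)) * of_nat ((m-l) choose (k-l)) * of_nat ((i+j-k) choose (i-l))"
proof -
  obtain a b c d e where ab: "m - i = a" "i - l = b" "k - l = c" "j + l - k = d" "m - k = e" by blast
  have h1: "m-k+j = e+c+d" "j = c + d" "i+j-k = b+d" "a + b = e + c" "m - l = a + b" "m - l = e + c"
    using assms ab by auto
  have f: "\<And>x y. (of_nat ((x+y) choose x) :: complex) = fact (x+y) / (fact x * fact y)"
    by (subst binomial_fact) auto
  have f2: "\<And>x y. (of_nat ((x+y) choose y) :: complex) = fact (x+y) / (fact y * fact x)"
    by (subst binomial_fact) auto
  have L: "(of_nat ((m-k+j) choose (m-k)) * of_nat ((m-l) choose (i-l)) * of_nat (j choose (k-l)) :: complex)
     = fact (e+c+d) / (fact e * fact (c+d)) * (fact (a+b) / (fact b * fact a)) * (fact (c+d) / (fact c * fact d))"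
    unfolding h1(1-3,5) ab using f[of e "c+d"] f2[of a b] f[of c d] by (simp add: add.assoc)
  have R: "(of_nat ((m-k+j) choose (m-i)) * of_nat ((m-l) choose (k-l)) * of_nat ((i+j-k) choose (i-l)) :: complex)
     = fact (e+c+d) / (fact a * fact (b+d)) * (fact (e+c) / (fact c * fact e)) * (fact (b+d) / (fact b * fact d))"
  proof -
    have q: "m-k+j = a+(b+d)" "i+j-k = b+d" "m - l = e + c" using assms ab by auto
    have q2: "e+c+d = a+(b+d)" using h1 by simp
    show ?thesis unfolding q unfolding ab q2 using f[of a "b+d"] f2[of e c] f[of b d] by simp
  qed
  show ?thesis unfolding L R using h1(4) by (simp add: field_simps)
qed

lemma aux:
  assumes "(x1::complex)*x2*x3 = y1*y2*y3"
  shows "x1*(s*x2*N*x3) = y1*(s*y2*N*y3)"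
proof -
  have "x1*(s*x2*N*x3) = (s*N)*(x1*x2*x3)" "y1*(s*y2*N*y3) = (s*N)*(y1*y2*y3)" by (simp_all add: ac_simps)
  then show ?thesis using assms by simp
qed

theorem proposition8p2:
  fixes m n k i j :: nat
  assumes "k \<le> min m n" and "i \<le> m" and "j \<le> n"
    and "k \<le> i + j" and "i + j \<le> m + n - k"
  shows "of_nat ((m - k + j) choose (m - k)) * cc m (n - k + i) i k (i + j - k)
       = of_nat ((m - k + j) choose (m - i)) * cc m n k i j"
proof -
  let ?T = "{l. l \<le> k \<and> l \<le> i \<and> k - l \<le> j}"
  have T1: "{l. l \<le> i \<and> l \<le> k \<and> i - l \<le> i + j - k} = ?T" using assms by auto
  have L: "cc m (n - k + i) i k (i + j - k) = (\<Sum>l\<in>?T. (-1)^l * of_nat ((m-l) choose (i-l))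
           * of_nat ((n-k+l) choose l) * of_nat (j choose (k-l)))"
    using assms by (subst cc_formula) (auto simp: T1 intro!: sum.cong)
  have R: "cc m n k i j = (\<Sum>l\<in>?T. (-1)^l * of_nat ((m-l) choose (k-l))
           * of_nat ((n-k+l) choose l) * of_nat ((i+j-k) choose (i-l)))"
    using assms by (subst cc_formula) auto
  show ?thesis unfolding L R sum_distrib_left
  proof (rule sum.cong[OF refl])
    fix l assume "l \<in> ?T"
    then have lf: "l \<le> i" "l \<le> k" "k \<le> j + l" by auto
    have km: "k \<le> m" using assms(1) by simp
    from term_id[OF lf assms(2) km]
    show "(of_nat ((m - k + j) choose (m - k)) :: complex) * ((-1)^l * of_nat ((m-l) choose (i-l))
           * of_nat ((n-k+l) choose l) * of_nat (j choose (k-l)))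
        = of_nat ((m - k + j) choose (m - i)) * ((-1)^l * of_nat ((m-l) choose (k-l))
           * of_nat ((n-k+l) choose l) * of_nat ((i+j-k) choose (i-l)))"
      by (rule aux)
  qed
qed

end
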